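(* Let $k,n\ge 1$ and $\theta>0$, and let $P_{n,k}$ be the number of nonempty boxes in the random allocation $\mathbf K_{n,k}$ described in the context. (a) If $k\ge n$, then for $|u|\le 1$ $$\mathbf E\left(u^{P_{n,k}}\right)=\sum_{p=0}^{n-1}\binom{n}{p}u^{n-p}(1-u)^p\,\frac{\sigma_k((n-p)\theta)}{\sigma_k(n\theta)},$$ and $$\mathbf P(P_{n,k}=p)=\binom{n}{p}\sum_{q=1}^{p}(-1)^{p-q}\binom{p}{q}\frac{\sigma_k(q\theta)}{\sigma_k(n\theta)},\qquad p\in\{1,\dots,n\}.$$ Moreover $$\mathbf E(P_{n,k})=n\left(1-\frac{\sigma_k((n-1)\theta)}{\sigma_k(n\theta)}\right),$$ $$\mathrm{Var}(P_{n,k})=n\left(\frac{\sigma_k((n-1)\theta)}{\sigma_k(n\theta)}+(n-1)\frac{\sigma_k((n-2)\theta)}{\sigma_k(n\theta)}-n\left(\frac{\sigma_k((n-1)\theta)}{\sigma_k(n\theta)}\right)^2\right).$$ (b) If $k<n$, the same formula for $\mathbf E(u^{P_{n,k}})$ holds, and $$\mathbf P(P_{n,k}=p)=\binom{n}{p}\sum_{q=1}^{p}(-1)^{p-q}\binom{p}{q}\frac{\sigma_k(q\theta)}{\sigma_k(n\theta)},\qquad p\in\{1,\dots,k\},$$ the support of $P_{n,k}$ being $\{1,\dots,k\}$.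
   Context: Let $(\phi_m)_{m\ge1}$ be nonnegative reals with $\phi_1>0$ such that $\phi(x)=\sum_{m\ge1}\phi_m x^m/m!$ has radius of convergence $x_0\in(0,\infty]$. For $\theta>0$ define the polynomials $\sigma_k(\theta)$ by $e^{\theta\phi(x)}=1+\sum_{k\ge1}\sigma_k(\theta)x^k/k!$, with $\sigma_0\equiv 1$. Equivalently, $\sigma_k(\theta)=\sum_{l=1}^k B_{k,l}(\phi_\bullet)\theta^l$, where $B_{k,l}(\phi_\bullet)=\frac{k!}{l!}[x^k]\phi(x)^l$. Fix $\theta>0$ and integers $n,k\ge1$. Let $\mathbf K_{n,k}=(K_{n,k}(1),\dots,K_{n,k}(n))$ be a random vector in $\mathbb N_0^n$ with $$\mathbf P(\mathbf K_{n,k}=(k_1,\dots,k_n))=\frac{k!}{\sigma_k(n\theta)}\prod_{m=1}^n\frac{\sigma_{k_m}(\theta)}{k_m!}\quad\text{whenever } k_1+\dots+k_n=k.$$ This is the law of $(\xi_1,\dots,\xi_n)$ conditioned on $\xi_1+\dots+\xi_n=k$, where the $\xi_i$ are iid with probability generating function $\mathbf E u^{\xi}=\exp(\theta(\phi(xu)-\phi(x)))$ for some $x\in(0,x_0)$; this law does not depend on $x$. Define $P_{n,k}:=\#\{m:K_{n,k}(m)>0\}$, the number of nonempty boxes. *)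

theory Defs
  imports "HOL-Analysis.Analysis" "HOL-Computational_Algebra.Formal_Power_Series"
begin

definition Phi_fps :: "(nat \<Rightarrow> real) \<Rightarrow> real fps" where
  "Phi_fps phi = Abs_fps (\<lambda>m. if m = 0 then 0 else phi m / fact m)"

definition bellB :: "(nat \<Rightarrow> real) \<Rightarrow> nat \<Rightarrow> nat \<Rightarrow> real" where
  "bellB phi k l = fact k / fact l * fps_nth (Phi_fps phi ^ l) k"

definition sigma :: "(nat \<Rightarrow> real) \<Rightarrow> nat \<Rightarrow> real \<Rightarrow> real" where
  "sigma phi k \<theta> = (if k = 0 then 1 else (\<Sum>l=1..k. bellB phi k l * \<theta> ^ l))"

text \<open>Configurations (k_1,...,k_n), boxes indexed by 0..n-1, with total k.\<close>
definition configs :: "nat \<Rightarrow> nat \<Rightarrow> (nat \<Rightarrow> nat) set" where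
  "configs n k = {ks. (\<forall>i. n \<le> i \<longrightarrow> ks i = 0) \<and> (\<Sum>i<n. ks i) = k}"

definition probK :: "(nat \<Rightarrow> real) \<Rightarrow> real \<Rightarrow> nat \<Rightarrow> nat \<Rightarrow> (nat \<Rightarrow> nat) \<Rightarrow> real" where
  "probK phi \<theta> n k ks =
     fact k / sigma phi k (real n * \<theta>) * (\<Prod>m<n. sigma phi (ks m) \<theta> / fact (ks m))"

definition nonempty :: "nat \<Rightarrow> (nat \<Rightarrow> nat) \<Rightarrow> nat" where
  "nonempty n ks = card {m. m < n \<and> 0 < ks m}"

definition probP :: "(nat \<Rightarrow> real) \<Rightarrow> real \<Rightarrow> nat \<Rightarrow> nat \<Rightarrow> nat \<Rightarrow> real" where
  "probP phi \<theta> n k p = (\<Sum>ks\<in>{ks\<in>configs n k. nonempty n ks = p}. probK phi \<theta> n k ks)"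

definition pgfP :: "(nat \<Rightarrow> real) \<Rightarrow> real \<Rightarrow> nat \<Rightarrow> nat \<Rightarrow> complex \<Rightarrow> complex" where
  "pgfP phi \<theta> n k u = (\<Sum>ks\<in>configs n k. complex_of_real (probK phi \<theta> n k ks) * u ^ nonempty n ks)"

definition meanP :: "(nat \<Rightarrow> real) \<Rightarrow> real \<Rightarrow> nat \<Rightarrow> nat \<Rightarrow> real" where
  "meanP phi \<theta> n k = (\<Sum>ks\<in>configs n k. probK phi \<theta> n k ks * real (nonempty n ks))"

definition varP :: "(nat \<Rightarrow> real) \<Rightarrow> real \<Rightarrow> nat \<Rightarrow> nat \<Rightarrow> real" where
  "varP phi \<theta> n k =
     (\<Sum>ks\<in>configs n k. probK phi \<theta> n k ks * real (nonempty n ks) ^ 2) - (meanP phi \<theta> n k) ^ 2"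

end

theory Submission
  imports Defs
begin
unbundle no vec_syntax
unbundle fps_syntax

definition Eser :: "(nat \<Rightarrow> real) \<Rightarrow> real \<Rightarrow> real fps" where
  "Eser phi t = Abs_fps (\<lambda>j. sigma phi j t / fact j)"

lemma Phi0[simp]: "Phi_fps phi $ 0 = 0"
  by (simp add: Phi_fps_def)

lemma Eser_eq: "Eser phi t = fps_exp t oo Phi_fps phi"
proof (rule fps_ext)
  fix j
  show "Eser phi t $ j = (fps_exp t oo Phi_fps phi) $ j"
  proof (cases "j = 0")
    case True then show ?thesis by (simp add: Eser_def sigma_def)
  next
    case False
    have "(fps_exp t oo Phi_fps phi) $ j = (\<Sum>i=0..j. t^i / fact i * (Phi_fps phi ^ i $ j))"
      by (simp add: fps_compose_nth)
    also have "\<dots> = (\<Sum>i=1..j. t^i / fact i * (Phi_fps phi ^ i $ j))"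
      using False by (simp add: sum.atLeast_Suc_atMost)
    also have "\<dots> = (\<Sum>l=1..j. bellB phi j l * t ^ l) / fact j"
      by (simp add: sum_divide_distrib bellB_def mult_ac)
    finally show ?thesis using False by (simp add: Eser_def sigma_def)
  qed
qed

lemma Eser_nth: "Eser phi t $ j = sigma phi j t / fact j"
  by (simp add: Eser_def)

lemma Eser_power: "Eser phi t ^ N = Eser phi (real N * t)"
  by (simp add: Eser_eq fps_compose_power fps_exp_power_mult)

lemma sigma_zero: "1 \<le> k \<Longrightarrow> sigma phi k 0 = 0"
  by (simp add: sigma_def)

lemma Phi_pow_nonneg:
  assumes "\<And>m. 1 \<le> m \<Longrightarrow> 0 \<le> phi m"
  shows "0 \<le> (Phi_fps phi ^ i) $ j"
proof (induction i arbitrary: j)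
  case 0 then show ?case by simp
next
  case (Suc i)
  have "0 \<le> Phi_fps phi $ a" for a using assms by (simp add: Phi_fps_def)
  then show ?case using Suc by (simp add: fps_mult_nth sum_nonneg)
qed

lemma sigma_pos:
  assumes "\<And>m. 1 \<le> m \<Longrightarrow> 0 \<le> phi m" "0 < phi 1" "0 < t"
  shows "0 < sigma phi j t"
proof -
  have "(fps_exp t oo Phi_fps phi) $ j = (\<Sum>i=0..j. t^i / fact i * (Phi_fps phi ^ i $ j))"
    by (simp add: fps_compose_nth)
  also have "\<dots> > 0"
  proof (rule sum_pos2[where i=j])
    show "0 < t^j / fact j * (Phi_fps phi ^ j $ j)"
      using assms by (simp add: startsby_zero_power_nth_same Phi_fps_def)
    show "0 \<le> t^i / fact i * (Phi_fps phi ^ i $ j)" for i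
      using assms Phi_pow_nonneg[of phi i j] by simp
  qed auto
  finally have "Eser phi t $ j > 0" by (simp add: Eser_eq)
  then show ?thesis by (simp add: Eser_nth zero_less_divide_iff)
qed

definition Cset :: "nat set \<Rightarrow> nat \<Rightarrow> (nat \<Rightarrow> nat) set" where
  "Cset A k = {ks. (\<forall>i. i \<notin> A \<longrightarrow> ks i = 0) \<and> sum ks A = k}"

lemma finite_Cset: assumes "finite A" shows "finite (Cset A k)"
proof -
  have "Cset A k \<subseteq> {f. \<forall>x. (x \<in> A \<longrightarrow> f x \<in> {0..k}) \<and> (x \<notin> A \<longrightarrow> f x = 0)}"
    using assms by (auto simp: Cset_def intro: member_le_sum)
  then show ?thesis
    by (rule finite_subset) (intro finite_set_of_finite_funs assms finite_atLeastAtMost)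
qed

lemma Cset_empty: "Cset {} k = (if k = 0 then {\<lambda>_. 0} else {})"
  by (auto simp: Cset_def)

lemma Cset_count:
  fixes F :: "real fps"
  assumes "finite A"
  shows "(\<Sum>ks\<in>Cset A k. \<Prod>m\<in>A. F $ ks m) = (F ^ card A) $ k"
  using assms
proof (induction A arbitrary: k rule: finite_induct)
  case empty
  then show ?case by (simp add: Cset_empty)
next
  case (insert a A k)
  have "(\<Sum>ks\<in>Cset (insert a A) k. \<Prod>m\<in>insert a A. F $ ks m)
      = (\<Sum>(j,ks)\<in>(SIGMA j:{0..k}. Cset A (k - j)). F $ j * (\<Prod>m\<in>A. F $ ks m))"
  proof (rule sum.reindex_bij_witness[where j = "\<lambda>ks. (ks a, ks(a := 0))" and i = "\<lambda>(j, ks). ks(a := j)"])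
    fix ks assume ks: "ks \<in> Cset (insert a A) k"
    show "(case (ks a, ks(a := 0)) of (j, ks) \<Rightarrow> ks(a := j)) = ks" by simp
    have s: "sum ks (insert a A) = ks a + sum ks A" using insert by simp
    have s2: "sum (ks(a:=0)) A = sum ks A" using insert by (intro sum.cong) auto
    show "(ks a, ks(a := 0)) \<in> (SIGMA j:{0..k}. Cset A (k - j))"
      using ks s s2 by (auto simp: Cset_def)
    have p2: "(\<Prod>m\<in>A. F $ (ks(a:=0)) m) = (\<Prod>m\<in>A. F $ ks m)" using insert by (intro prod.cong) auto
    show "(case (ks a, ks(a := 0)) of (j, ks) \<Rightarrow> F $ j * (\<Prod>m\<in>A. F $ ks m)) = (\<Prod>m\<in>insert a A. F $ ks m)"
      using insert p2 by simp
  next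
    fix b assume b: "b \<in> (SIGMA j:{0..k}. Cset A (k - j))"
    then obtain j ks where b': "b = (j, ks)" "j \<le> k" "ks \<in> Cset A (k - j)" by auto
    have ka: "ks a = 0" using b' insert by (auto simp: Cset_def)
    show "((case b of (j, ks) \<Rightarrow> ks(a := j)) a, (case b of (j, ks) \<Rightarrow> ks(a := j))(a := 0)) = b"
      using b' ka by auto
    have s2: "sum (ks(a:=j)) A = sum ks A" using insert by (intro sum.cong) auto
    show "(case b of (j, ks) \<Rightarrow> ks(a := j)) \<in> Cset (insert a A) k"
      using b' s2 insert by (auto simp: Cset_def)
  qed
  also have "\<dots> = (\<Sum>j=0..k. F $ j * (\<Sum>ks\<in>Cset A (k - j). \<Prod>m\<in>A. F $ ks m))"
    by (subst sum.Sigma[symmetric]) (auto simp: finite_Cset insert(1) sum_distrib_left)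
  also have "\<dots> = (\<Sum>j=0..k. F $ j * (F ^ card A) $ (k - j))"
    using insert by simp
  also have "\<dots> = (F ^ card (insert a A)) $ k"
    using insert by (simp add: fps_mult_nth)
  finally show ?case .
qed

definition rr :: "(nat \<Rightarrow> real) \<Rightarrow> real \<Rightarrow> nat \<Rightarrow> nat \<Rightarrow> nat \<Rightarrow> real" where
  "rr phi \<theta> n k q = sigma phi k (real q * \<theta>) / sigma phi k (real n * \<theta>)"

lemma configs_Cset: "configs n k = Cset {..<n} k"
  by (auto simp: configs_def Cset_def)

lemma finite_configs: "finite (configs n k)"
  by (simp add: configs_Cset finite_Cset)

lemma Eser0: "Eser phi t $ 0 = 1"
  by (simp add: Eser_nth sigma_def)

lemma probK_alt: "probK phi \<theta> n k ks = fact k / sigma phi k (real n * \<theta>) * (\<Prod>m<n. Eser phi \<theta> $ ks m)"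
  by (simp add: probK_def Eser_nth)

lemma avoid:
  assumes S: "S \<subseteq> {..<n}"
  shows "(\<Sum>ks\<in>{ks\<in>configs n k. \<forall>m\<in>S. ks m = 0}. probK phi \<theta> n k ks) = rr phi \<theta> n k (n - card S)"
proof -
  let ?A = "{..<n} - S"
  have fS: "finite S" using S finite_subset by blast
  have seteq: "{ks\<in>configs n k. \<forall>m\<in>S. ks m = 0} = Cset ?A k"
  proof (intro set_eqI iffI)
    fix ks assume ks: "ks \<in> {ks\<in>configs n k. \<forall>m\<in>S. ks m = 0}"
    have "sum ks ?A = sum ks {..<n}" using ks by (intro sum.mono_neutral_left) auto
    then show "ks \<in> Cset ?A k" using ks by (auto simp: configs_def Cset_def)
  next
    fix ks assume ks: "ks \<in> Cset ?A k"
    have z: "\<forall>i. i \<notin> ?A \<longrightarrow> ks i = 0" using ks by (simp add: Cset_def)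
    have "sum ks ?A = sum ks {..<n}" by (rule sum.mono_neutral_left) (use z in auto)
    moreover have "sum ks ?A = k" using ks by (simp add: Cset_def)
    moreover have "\<forall>m\<in>S. ks m = 0" using z by auto
    moreover have "\<forall>i. n \<le> i \<longrightarrow> ks i = 0" using z by auto
    ultimately show "ks \<in> {ks\<in>configs n k. \<forall>m\<in>S. ks m = 0}" by (simp add: configs_def)
  qed
  have prodeq: "(\<Prod>m<n. Eser phi \<theta> $ ks m) = (\<Prod>m\<in>?A. Eser phi \<theta> $ ks m)" if "ks \<in> Cset ?A k" for ks
  proof -
    have z: "\<forall>i. i \<notin> ?A \<longrightarrow> ks i = 0" using that by (simp add: Cset_def)
    show ?thesis by (rule prod.mono_neutral_right) (use z in \<open>auto simp: Eser0\<close>)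
  qed
  have "(\<Sum>ks\<in>{ks\<in>configs n k. \<forall>m\<in>S. ks m = 0}. probK phi \<theta> n k ks)
      = fact k / sigma phi k (real n * \<theta>) * (\<Sum>ks\<in>Cset ?A k. \<Prod>m\<in>?A. Eser phi \<theta> $ ks m)"
    unfolding seteq probK_alt sum_distrib_left using prodeq by (intro sum.cong) auto
  also have "\<dots> = fact k / sigma phi k (real n * \<theta>) * (Eser phi \<theta> ^ card ?A) $ k"
    by (simp add: Cset_count)
  also have "card ?A = n - card S" using S fS by (simp add: card_Diff_subset)
  also have "fact k / sigma phi k (real n * \<theta>) * (Eser phi \<theta> ^ (n - card S)) $ k = rr phi \<theta> n k (n - card S)"
    by (simp add: Eser_power Eser_nth rr_def)
  finally show ?thesis .
qed

lemma subsets_card_sum: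
  fixes f :: "nat \<Rightarrow> 'a::comm_semiring_1"
  assumes A: "finite A"
  shows "(\<Sum>S\<in>Pow A. f (card S)) = (\<Sum>j\<le>card A. of_nat (card A choose j) * f j)"
proof -
  have "(\<Sum>S\<in>Pow A. f (card S)) = (\<Sum>j\<le>card A. \<Sum>S\<in>{S. S \<in> Pow A \<and> card S = j}. f (card S))"
    using A by (intro sum.group[symmetric]) (auto intro: card_mono)
  also have "\<dots> = (\<Sum>j\<le>card A. of_nat (card A choose j) * f j)"
  proof (intro sum.cong refl)
    fix j
    have "(\<Sum>S\<in>{S. S \<in> Pow A \<and> card S = j}. f (card S)) = (\<Sum>S\<in>{S. S \<subseteq> A \<and> card S = j}. f j)"
      by (intro sum.cong) auto
    also have "\<dots> = of_nat (card A choose j) * f j" using n_subsets[OF A] by simp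
    finally show "(\<Sum>S\<in>{S. S \<in> Pow A \<and> card S = j}. f (card S)) = of_nat (card A choose j) * f j" .
  qed
  finally show ?thesis .
qed

definition zc :: "nat \<Rightarrow> (nat \<Rightarrow> nat) \<Rightarrow> nat" where
  "zc n ks = card {m. m < n \<and> ks m = 0}"

lemma zc_le: "zc n ks \<le> n"
proof -
  have "card {m. m < n \<and> ks m = 0} \<le> card {..<n}" by (intro card_mono) auto
  then show ?thesis by (simp add: zc_def)
qed

lemma nonempty_eq: "nonempty n ks = n - zc n ks"
proof -
  have "{m. m < n \<and> 0 < ks m} = {..<n} - {m. m < n \<and> ks m = 0}" by auto
  moreover have "card ({..<n} - {m. m < n \<and> ks m = 0}) = n - card {m. m < n \<and> ks m = 0}"
    by (subst card_Diff_subset) auto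
  ultimately show ?thesis by (simp add: nonempty_def zc_def)
qed

lemma master:
  fixes g :: "nat \<Rightarrow> 'a::{real_algebra_1,comm_ring_1}"
  shows "(\<Sum>ks\<in>configs n k. of_real (probK phi \<theta> n k ks) * (\<Sum>j\<le>n. of_nat (zc n ks choose j) * g j))
       = (\<Sum>j\<le>n. of_nat (n choose j) * (of_real (rr phi \<theta> n k (n - j)) * g j))"
proof -
  let ?Z = "\<lambda>ks. {m. m < n \<and> ks m = 0}"
  have inner: "(\<Sum>j\<le>n. of_nat (zc n ks choose j) * g j) = (\<Sum>S\<in>Pow {..<n}. if S \<subseteq> ?Z ks then g (card S) else 0)" for ks
  proof -
    have fZ: "finite (?Z ks)" by simp
    have "(\<Sum>j\<le>n. of_nat (zc n ks choose j) * g j) = (\<Sum>j\<le>zc n ks. of_nat (zc n ks choose j) * g j)"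
      using zc_le[of n ks] by (intro sum.mono_neutral_right) (auto simp: binomial_eq_0)
    also have "\<dots> = (\<Sum>S\<in>Pow (?Z ks). g (card S))"
      using subsets_card_sum[OF fZ, of g] by (simp add: zc_def)
    also have "\<dots> = (\<Sum>S\<in>Pow {..<n}. if S \<subseteq> ?Z ks then g (card S) else 0)"
      by (subst sum.inter_filter[symmetric]) (auto intro!: sum.cong)
    finally show ?thesis .
  qed
  have "(\<Sum>ks\<in>configs n k. of_real (probK phi \<theta> n k ks) * (\<Sum>j\<le>n. of_nat (zc n ks choose j) * g j))
      = (\<Sum>ks\<in>configs n k. \<Sum>S\<in>Pow {..<n}. of_real (probK phi \<theta> n k ks) * (if S \<subseteq> ?Z ks then g (card S) else 0))"
    by (simp add: inner sum_distrib_left)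
  also have "\<dots> = (\<Sum>S\<in>Pow {..<n}. \<Sum>ks\<in>configs n k. of_real (probK phi \<theta> n k ks) * (if S \<subseteq> ?Z ks then g (card S) else 0))"
    by (rule sum.swap)
  also have "\<dots> = (\<Sum>S\<in>Pow {..<n}. of_real (rr phi \<theta> n k (n - card S)) * g (card S))"
  proof (intro sum.cong refl)
    fix S assume S: "S \<in> Pow {..<n}"
    have "(\<Sum>ks\<in>configs n k. of_real (probK phi \<theta> n k ks) * (if S \<subseteq> ?Z ks then g (card S) else 0))
        = (\<Sum>ks\<in>configs n k. (if \<forall>m\<in>S. ks m = 0 then of_real (probK phi \<theta> n k ks) else 0) * g (card S))"
      using S by (intro sum.cong) auto
    also have "\<dots> = (\<Sum>ks\<in>{ks\<in>configs n k. \<forall>m\<in>S. ks m = 0}. of_real (probK phi \<theta> n k ks)) * g (card S)"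
      by (simp add: sum_distrib_right[symmetric] sum.inter_filter finite_configs)
    also have "\<dots> = of_real (rr phi \<theta> n k (n - card S)) * g (card S)"
      using avoid[where S=S and n=n and k=k and phi=phi and \<theta>=\<theta>] S by (simp flip: of_real_sum)
    finally show "(\<Sum>ks\<in>configs n k. of_real (probK phi \<theta> n k ks) * (if S \<subseteq> ?Z ks then g (card S) else 0))
        = of_real (rr phi \<theta> n k (n - card S)) * g (card S)" .
  qed
  also have "\<dots> = (\<Sum>j\<le>n. of_nat (n choose j) * (of_real (rr phi \<theta> n k (n - j)) * g j))"
    using subsets_card_sum[of "{..<n}" "\<lambda>c. of_real (rr phi \<theta> n k (n - c)) * g c"] by simp
  finally show ?thesis .
qed

lemma binom_aux:
  fixes u :: "'a::comm_ring_1"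
  assumes "z \<le> n"
  shows "(\<Sum>j\<le>n. of_nat (z choose j) * (u^(n-j) * (1-u)^j)) = u^(n-z)"
proof -
  have "(\<Sum>j\<le>n. of_nat (z choose j) * (u^(n-j) * (1-u)^j)) = (\<Sum>j\<le>z. of_nat (z choose j) * (u^(n-j) * (1-u)^j))"
    using assms by (intro sum.mono_neutral_right) (auto simp: binomial_eq_0)
  also have "\<dots> = (\<Sum>j\<le>z. of_nat (z choose j) * (1-u)^j * u^(z-j)) * u^(n-z)"
    unfolding sum_distrib_right
  proof (intro sum.cong refl)
    fix j assume "j \<in> {..z}"
    then have "u^(n-j) = u^(z-j) * u^(n-z)" using assms by (simp add: power_add[symmetric])
    then show "of_nat (z choose j) * (u^(n-j) * (1-u)^j) = of_nat (z choose j) * (1-u)^j * u^(z-j) * u^(n-z)"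
      by (simp add: mult_ac)
  qed
  also have "\<dots> = ((1 - u) + u)^z * u^(n-z)" by (simp only: binomial_ring)
  finally show ?thesis by simp
qed

lemma inv_aux:
  assumes "z \<le> n"
  shows "(\<Sum>j\<le>n. real (z choose j) * ((-1)^(j-m) * real (j choose m))) = (if z = m then 1 else 0)"
proof -
  have "(\<Sum>j\<le>n. real (z choose j) * ((-1)^(j-m) * real (j choose m))) = (\<Sum>j\<le>z. real (z choose j) * ((-1)^(j-m) * real (j choose m)))"
    using assms by (intro sum.mono_neutral_right) (auto simp: binomial_eq_0)
  also have "\<dots> = (if z = m then 1 else 0)"
  proof (cases "m \<le> z")
    case False
    then show ?thesis by (auto simp: binomial_eq_0 intro!: sum.neutral)
  next
    case True
    have "(\<Sum>j\<le>z. real (z choose j) * ((-1)^(j-m) * real (j choose m))) = (\<Sum>j=m..z. real (z choose j) * ((-1)^(j-m) * real (j choose m)))"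
      by (intro sum.mono_neutral_right) (auto simp: binomial_eq_0)
    also have "\<dots> = (\<Sum>j=m..z. real (z choose m) * ((-1)^(j-m) * real ((z - m) choose (j - m))))"
    proof (intro sum.cong refl)
      fix j assume "j \<in> {m..z}"
      then have "(z choose j) * (j choose m) = (z choose m) * ((z - m) choose (j - m))" by (simp add: choose_mult)
      then have "real (z choose j) * real (j choose m) = real (z choose m) * real ((z - m) choose (j - m))"
        by (metis of_nat_mult)
      then show "real (z choose j) * ((-1)^(j-m) * real (j choose m)) = real (z choose m) * ((-1)^(j-m) * real ((z - m) choose (j - m)))"
        by (simp add: mult_ac)
    qed
    also have "\<dots> = real (z choose m) * (\<Sum>i=0..z-m. (-1)^i * real ((z - m) choose i))"
    proof -
      have "(\<Sum>j=m..z. real (z choose m) * ((-1)^(j-m) * real ((z - m) choose (j - m))))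
          = (\<Sum>i=0..z-m. real (z choose m) * ((-1)^i * real ((z - m) choose i)))"
        using True by (intro sum.reindex_bij_witness[where i="\<lambda>i. i + m" and j="\<lambda>j. j - m"]) auto
      then show ?thesis by (simp add: sum_distrib_left)
    qed
    also have "\<dots> = (if z = m then 1 else 0)"
    proof (cases "z = m")
      case True then show ?thesis by simp
    next
      case False
      then have "z - m > 0" using \<open>m \<le> z\<close> by simp
      then show ?thesis using choose_alternating_sum[of "z - m", where 'a=real] False by (simp add: atLeast0AtMost)
    qed
    finally show ?thesis .
  qed
  finally show ?thesis .
qed

lemma three_aux:
  fixes g :: "nat \<Rightarrow> 'a::comm_ring_1"
  assumes "z \<le> n" "\<And>j. 2 < j \<Longrightarrow> g j = 0"
  shows "(\<Sum>j\<le>n. of_nat (z choose j) * g j) = g 0 + of_nat z * g 1 + of_nat (z choose 2) * g 2"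
proof -
  have "(\<Sum>j\<le>n. of_nat (z choose j) * g j) = (\<Sum>j\<le>n+2. of_nat (z choose j) * g j)"
    using assms by (intro sum.mono_neutral_left) (auto simp: binomial_eq_0)
  also have "\<dots> = (\<Sum>j\<in>{0,1,2}. of_nat (z choose j) * g j)"
    using assms by (intro sum.mono_neutral_right) auto
  finally show ?thesis by simp
qed

lemma choose2_real: "2 * real (z choose 2) = real z * (real z - 1)"
proof (induction z)
  case 0 then show ?case by simp
next
  case (Suc z)
  have "Suc z choose 2 = z + (z choose 2)" by (simp add: numeral_2_eq_2)
  then show ?case using Suc by (simp add: algebra_simps)
qed

lemma rr_0: "1 \<le> k \<Longrightarrow> rr phi \<theta> n k 0 = 0"
  by (simp add: rr_def sigma_zero)

lemma rr_n:
  assumes "\<And>m. 1 \<le> m \<Longrightarrow> 0 \<le> phi m" "0 < phi 1" "0 < \<theta>" "1 \<le> n"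
  shows "rr phi \<theta> n k n = 1"
proof -
  have "0 < sigma phi k (real n * \<theta>)" using assms by (intro sigma_pos) auto
  then show ?thesis by (simp add: rr_def)
qed

lemma pgf_formula:
  assumes "1 \<le> k"
  shows "pgfP phi \<theta> n k u =
          (\<Sum>p<n. of_nat (n choose p) * u ^ (n - p) * (1 - u) ^ p *
             complex_of_real (sigma phi k (real (n - p) * \<theta>) / sigma phi k (real n * \<theta>)))"
proof -
  have "pgfP phi \<theta> n k u = (\<Sum>ks\<in>configs n k. of_real (probK phi \<theta> n k ks) * (\<Sum>j\<le>n. of_nat (zc n ks choose j) * (u^(n-j) * (1-u)^j)))"
    unfolding pgfP_def by (intro sum.cong refl) (simp add: binom_aux zc_le nonempty_eq)
  also have "\<dots> = (\<Sum>j\<le>n. of_nat (n choose j) * (of_real (rr phi \<theta> n k (n - j)) * (u^(n-j) * (1-u)^j)))"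
    by (rule master)
  also have "\<dots> = (\<Sum>j<n. of_nat (n choose j) * (of_real (rr phi \<theta> n k (n - j)) * (u^(n-j) * (1-u)^j)))"
    using assms by (simp add: lessThan_Suc_atMost[symmetric] rr_0)
  also have "\<dots> = (\<Sum>p<n. of_nat (n choose p) * u ^ (n - p) * (1 - u) ^ p *
             complex_of_real (sigma phi k (real (n - p) * \<theta>) / sigma phi k (real n * \<theta>)))"
    by (intro sum.cong refl) (simp add: rr_def mult_ac)
  finally show ?thesis .
qed

lemma probP_formula:
  assumes "1 \<le> k" "1 \<le> p" "p \<le> n"
  shows "probP phi \<theta> n k p =
           real (n choose p) * (\<Sum>q=1..p. (-1) ^ (p - q) * real (p choose q) *
             (sigma phi k (real q * \<theta>) / sigma phi k (real n * \<theta>)))"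
proof -
  let ?m = "n - p"
  let ?g = "\<lambda>j. (-1::real)^(j - ?m) * real (j choose ?m)"
  have "probP phi \<theta> n k p = (\<Sum>ks\<in>configs n k. if nonempty n ks = p then probK phi \<theta> n k ks else 0)"
    unfolding probP_def by (simp add: sum.inter_filter finite_configs)
  also have "\<dots> = (\<Sum>ks\<in>configs n k. of_real (probK phi \<theta> n k ks) * (\<Sum>j\<le>n. of_nat (zc n ks choose j) * ?g j))"
  proof (intro sum.cong refl)
    fix ks
    have z: "zc n ks \<le> n" by (rule zc_le)
    have "(nonempty n ks = p) = (zc n ks = ?m)" using z assms by (auto simp: nonempty_eq)
    then show "(if nonempty n ks = p then probK phi \<theta> n k ks else 0) = of_real (probK phi \<theta> n k ks) * (\<Sum>j\<le>n. of_nat (zc n ks choose j) * ?g j)"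
      using inv_aux[OF z, of ?m] by simp
  qed
  also have "\<dots> = (\<Sum>j\<le>n. of_nat (n choose j) * (of_real (rr phi \<theta> n k (n - j)) * ?g j))"
    by (rule master)
  also have "\<dots> = (\<Sum>q\<le>n. real (n choose (n - q)) * (rr phi \<theta> n k q * ?g (n - q)))"
    by (intro sum.reindex_bij_witness[where i="\<lambda>q. n - q" and j="\<lambda>j. n - j"]) auto
  also have "\<dots> = (\<Sum>q=1..p. real (n choose (n - q)) * (rr phi \<theta> n k q * ?g (n - q)))"
  proof -
    have Z: "real (n choose (n - q)) * (rr phi \<theta> n k q * ?g (n - q)) = 0" if q: "q \<in> {..n} - {1..p}" for q
    proof (cases "q = 0")
      case True then show ?thesis using assms by (simp add: rr_0)
    next
      case False
      then have "n - q < n - p" using q assms by auto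
      then show ?thesis by (simp add: binomial_eq_0)
    qed
    show ?thesis by (rule sum.mono_neutral_right) (use Z assms in auto)
  qed
  also have "\<dots> = (\<Sum>q=1..p. real (n choose p) * ((-1) ^ (p - q) * real (p choose q) * rr phi \<theta> n k q))"
  proof (intro sum.cong refl)
    fix q assume q: "q \<in> {1..p}"
    have "(n choose (n - q)) * ((n - q) choose (n - p)) = (n choose (n - p)) * ((n - (n - p)) choose ((n - q) - (n - p)))"
      using q assms by (intro choose_mult) auto
    also have "n - (n - p) = p" using assms by simp
    also have "(n - q) - (n - p) = p - q" using q assms by simp
    also have "n choose (n - p) = n choose p" using assms by (simp add: binomial_symmetric[symmetric])
    also have "p choose (p - q) = p choose q" using q by (simp add: binomial_symmetric[symmetric])
    finally have e: "real (n choose (n - q)) * real ((n - q) choose (n - p)) = real (n choose p) * real (p choose q)"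
      by (metis of_nat_mult)
    have "real (n choose (n - q)) * (rr phi \<theta> n k q * ?g (n - q))
        = (-1) ^ (p - q) * (real (n choose (n - q)) * real ((n - q) choose (n - p))) * rr phi \<theta> n k q"
      using q assms by (simp add: mult_ac \<open>(n - q) - (n - p) = p - q\<close>)
    also have "\<dots> = real (n choose p) * ((-1) ^ (p - q) * real (p choose q) * rr phi \<theta> n k q)"
      by (simp add: e mult_ac)
    finally show "real (n choose (n - q)) * (rr phi \<theta> n k q * ?g (n - q)) = real (n choose p) * ((-1) ^ (p - q) * real (p choose q) * rr phi \<theta> n k q)" .
  qed
  also have "\<dots> = real (n choose p) * (\<Sum>q=1..p. (-1) ^ (p - q) * real (p choose q) *
             (sigma phi k (real q * \<theta>) / sigma phi k (real n * \<theta>)))"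
    by (simp add: sum_distrib_left rr_def)
  finally show ?thesis .
qed

lemma mean_formula:
  assumes "\<And>m. 1 \<le> m \<Longrightarrow> 0 \<le> phi m" "0 < phi 1" "0 < \<theta>" "1 \<le> n"
  shows "meanP phi \<theta> n k = real n * (1 - rr phi \<theta> n k (n - 1))"
proof -
  define g :: "nat \<Rightarrow> real" where "g = (\<lambda>j. if j = 0 then real n else if j = 1 then -1 else 0)"
  have g2: "\<And>j. 2 < j \<Longrightarrow> g j = 0" by (simp add: g_def)
  have "meanP phi \<theta> n k = (\<Sum>ks\<in>configs n k. of_real (probK phi \<theta> n k ks) * (\<Sum>j\<le>n. of_nat (zc n ks choose j) * g j))"
    unfolding meanP_def
  proof (intro sum.cong refl)
    fix ks
    have z: "zc n ks \<le> n" by (rule zc_le)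
    show "probK phi \<theta> n k ks * real (nonempty n ks) = of_real (probK phi \<theta> n k ks) * (\<Sum>j\<le>n. of_nat (zc n ks choose j) * g j)"
      using three_aux[OF z g2] z by (simp add: g_def nonempty_eq of_nat_diff)
  qed
  also have "\<dots> = (\<Sum>j\<le>n. of_nat (n choose j) * (of_real (rr phi \<theta> n k (n - j)) * g j))"
    by (rule master)
  also have "\<dots> = real n * (1 - rr phi \<theta> n k (n - 1))"
    using three_aux[of n n "\<lambda>j. of_real (rr phi \<theta> n k (n - j)) * g j"] g2 rr_n[where phi=phi and \<theta>=\<theta> and n=n and k=k, OF assms]
    by (simp add: g_def algebra_simps)
  finally show ?thesis .
qed

lemma second_formula:
  assumes "\<And>m. 1 \<le> m \<Longrightarrow> 0 \<le> phi m" "0 < phi 1" "0 < \<theta>" "1 \<le> n"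
  shows "(\<Sum>ks\<in>configs n k. probK phi \<theta> n k ks * real (nonempty n ks) ^ 2)
       = real n ^ 2 + real n * (1 - 2 * real n) * rr phi \<theta> n k (n - 1) + real n * (real n - 1) * rr phi \<theta> n k (n - 2)"
proof -
  define g :: "nat \<Rightarrow> real" where "g = (\<lambda>j. if j = 0 then real n ^ 2 else if j = 1 then 1 - 2 * real n else if j = 2 then 2 else 0)"
  have g2: "\<And>j. 2 < j \<Longrightarrow> g j = 0" by (simp add: g_def)
  have "(\<Sum>ks\<in>configs n k. probK phi \<theta> n k ks * real (nonempty n ks) ^ 2) = (\<Sum>ks\<in>configs n k. of_real (probK phi \<theta> n k ks) * (\<Sum>j\<le>n. of_nat (zc n ks choose j) * g j))"
  proof (intro sum.cong refl)
    fix ks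
    have z: "zc n ks \<le> n" by (rule zc_le)
    have c: "2 * real (zc n ks choose 2) = real (zc n ks) * (real (zc n ks) - 1)" by (rule choose2_real)
    have "real (nonempty n ks) ^ 2 = (real n - real (zc n ks)) ^ 2" using z by (simp add: nonempty_eq of_nat_diff)
    also have "\<dots> = g 0 + real (zc n ks) * g 1 + real (zc n ks choose 2) * g 2"
      using c by (simp add: g_def power2_eq_square algebra_simps)
    finally show "probK phi \<theta> n k ks * real (nonempty n ks) ^ 2 = of_real (probK phi \<theta> n k ks) * (\<Sum>j\<le>n. of_nat (zc n ks choose j) * g j)"
      using three_aux[OF z g2] by simp
  qed
  also have "\<dots> = (\<Sum>j\<le>n. of_nat (n choose j) * (of_real (rr phi \<theta> n k (n - j)) * g j))"
    by (rule master)
  also have "\<dots> = real n ^ 2 + real n * (1 - 2 * real n) * rr phi \<theta> n k (n - 1) + real n * (real n - 1) * rr phi \<theta> n k (n - 2)"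
  proof -
    have c: "2 * real (n choose 2) = real n * (real n - 1)" by (rule choose2_real)
    have c2: "real (n choose 2) * (rr phi \<theta> n k (n - 2) * 2) = real n * (real n - 1) * rr phi \<theta> n k (n - 2)"
      by (simp add: c[symmetric] mult_ac)
    have "(\<Sum>j\<le>n. of_nat (n choose j) * (of_real (rr phi \<theta> n k (n - j)) * g j))
        = rr phi \<theta> n k n * real n ^ 2 + real n * (rr phi \<theta> n k (n - 1) * (1 - 2 * real n)) + real (n choose 2) * (rr phi \<theta> n k (n - 2) * 2)"
      using three_aux[of n n "\<lambda>j. of_real (rr phi \<theta> n k (n - j)) * g j"] g2 by (simp add: g_def)
    then show ?thesis
      using rr_n[where phi=phi and \<theta>=\<theta> and n=n and k=k, OF assms] c2
      by (simp add: algebra_simps)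
  qed
  finally show ?thesis .
qed

lemma nonempty_bounds:
  assumes "ks \<in> configs n k" "1 \<le> k"
  shows "1 \<le> nonempty n ks" "nonempty n ks \<le> k"
proof -
  let ?N = "{m. m < n \<and> 0 < ks m}"
  have sk: "sum ks {..<n} = k" using assms by (simp add: configs_def)
  have fN: "finite ?N" by simp
  have "card ?N = (\<Sum>m\<in>?N. 1::nat)" by simp
  also have "\<dots> \<le> (\<Sum>m\<in>?N. ks m)" by (intro sum_mono) auto
  also have "\<dots> \<le> sum ks {..<n}" by (intro sum_mono2) auto
  finally show "nonempty n ks \<le> k" using sk by (simp add: nonempty_def)
  show "1 \<le> nonempty n ks"
  proof (rule ccontr)
    assume "\<not> 1 \<le> nonempty n ks"
    then have "card ?N = 0" unfolding nonempty_def by arith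
    then have "?N = {}" using fN by (simp only: card_0_eq)
    then have "\<forall>m\<in>{..<n}. ks m = 0" by auto
    then have "sum ks {..<n} = 0" by simp
    then show False using sk assms by simp
  qed
qed

lemma probK_pos:
  assumes "\<And>m. 1 \<le> m \<Longrightarrow> 0 \<le> phi m" "0 < phi 1" "0 < \<theta>" "1 \<le> n"
  shows "0 < probK phi \<theta> n k ks"
proof -
  have "0 < sigma phi k (real n * \<theta>)" using assms by (intro sigma_pos) auto
  moreover have "0 < sigma phi j \<theta>" for j using assms by (intro sigma_pos) auto
  ultimately show ?thesis unfolding probK_def
    by (intro mult_pos_pos divide_pos_pos prod_pos) auto
qed

lemma support:
  assumes "\<And>m. 1 \<le> m \<Longrightarrow> 0 \<le> phi m" "0 < phi 1" "0 < \<theta>" "1 \<le> k" "k < n"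
  shows "{p. probP phi \<theta> n k p \<noteq> 0} = {1..k}"
proof (intro set_eqI iffI)
  fix p assume p: "p \<in> {p. probP phi \<theta> n k p \<noteq> 0}"
  show "p \<in> {1..k}"
  proof (rule ccontr)
    assume np: "p \<notin> {1..k}"
    have "{ks\<in>configs n k. nonempty n ks = p} = {}"
      using np nonempty_bounds[OF _ assms(4)] by fastforce
    then have "probP phi \<theta> n k p = 0" unfolding probP_def by (simp only: sum.empty)
    then show False using p by simp
  qed
next
  fix p assume p: "p \<in> {1..k}"
  then obtain p' where p': "p = Suc p'" by (cases p) auto
  define ks0 :: "nat \<Rightarrow> nat" where "ks0 = (\<lambda>m. if m < p then (if m = 0 then k - p' else 1) else 0)"
  have pn: "p \<le> n" using p assms by auto
  have s0: "sum ks0 {..<n} = sum ks0 {..<p}"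
    using pn by (intro sum.mono_neutral_right) (auto simp: ks0_def)
  also have "\<dots> = (k - p') + (\<Sum>m<p'. ks0 (Suc m))" unfolding p' by (subst sum.lessThan_Suc_shift) (simp add: ks0_def p')
  also have "(\<Sum>m<p'. ks0 (Suc m)) = p'" by (simp add: ks0_def p')
  finally have s: "sum ks0 {..<n} = k" using p p' by simp
  have cfg: "ks0 \<in> configs n k" using s pn by (auto simp: configs_def ks0_def)
  have "{m. m < n \<and> 0 < ks0 m} = {..<p}" using pn p p' by (auto simp: ks0_def)
  then have ne: "nonempty n ks0 = p" by (simp add: nonempty_def)
  have "0 < probP phi \<theta> n k p"
    unfolding probP_def
  proof (rule sum_pos2[where i=ks0])
    show "finite {ks \<in> configs n k. nonempty n ks = p}" by (simp add: finite_configs)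
    show "ks0 \<in> {ks \<in> configs n k. nonempty n ks = p}" using cfg ne by simp
    show "0 < probK phi \<theta> n k ks0" using assms by (intro probK_pos) auto
    show "0 \<le> probK phi \<theta> n k i" for i using assms probK_pos[of phi \<theta> n k i] by force
  qed
  then show "p \<in> {p. probP phi \<theta> n k p \<noteq> 0}" by simp
qed
theorem proposition1:
  fixes phi :: "nat \<Rightarrow> real" and \<theta> :: real and n k :: nat
  assumes phi_nonneg: "\<And>m. 1 \<le> m \<Longrightarrow> 0 \<le> phi m"
    and phi1: "0 < phi 1"
    and radius: "\<exists>x>0. summable (\<lambda>m. phi m * x ^ m / fact m)"
    and theta: "0 < \<theta>" and n1: "1 \<le> n" and k1: "1 \<le> k"
  shows
    "(\<forall>u::complex. norm u \<le> 1 \<longrightarrow>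
        pgfP phi \<theta> n k u =
          (\<Sum>p<n. of_nat (n choose p) * u ^ (n - p) * (1 - u) ^ p *
             complex_of_real (sigma phi k (real (n - p) * \<theta>) / sigma phi k (real n * \<theta>))))
     \<and> (n \<le> k \<longrightarrow>
        (\<forall>p\<in>{1..n}. probP phi \<theta> n k p =
           real (n choose p) * (\<Sum>q=1..p. (-1) ^ (p - q) * real (p choose q) *
             (sigma phi k (real q * \<theta>) / sigma phi k (real n * \<theta>))))
        \<and> meanP phi \<theta> n k =
            real n * (1 - sigma phi k (real (n - 1) * \<theta>) / sigma phi k (real n * \<theta>))
        \<and> varP phi \<theta> n k =
            real n * (sigma phi k (real (n - 1) * \<theta>) / sigma phi k (real n * \<theta>)
              + (real n - 1) * (sigma phi k (real (n - 2) * \<theta>) / sigma phi k (real n * \<theta>))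
              - real n * (sigma phi k (real (n - 1) * \<theta>) / sigma phi k (real n * \<theta>)) ^ 2))
     \<and> (k < n \<longrightarrow>
        (\<forall>p\<in>{1..k}. probP phi \<theta> n k p =
           real (n choose p) * (\<Sum>q=1..p. (-1) ^ (p - q) * real (p choose q) *
             (sigma phi k (real q * \<theta>) / sigma phi k (real n * \<theta>))))
        \<and> {p. probP phi \<theta> n k p \<noteq> 0} = {1..k})"
proof -
  have A: "\<And>m. 1 \<le> m \<Longrightarrow> 0 \<le> phi m" "0 < phi 1" "0 < \<theta>" "1 \<le> n"
    using phi_nonneg phi1 theta n1 by auto
  have s_pos: "0 < sigma phi k (real n * \<theta>)" using A by (intro sigma_pos) auto
  have P1: "\<forall>u::complex. norm u \<le> 1 \<longrightarrow>
        pgfP phi \<theta> n k u =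
          (\<Sum>p<n. of_nat (n choose p) * u ^ (n - p) * (1 - u) ^ p *
             complex_of_real (sigma phi k (real (n - p) * \<theta>) / sigma phi k (real n * \<theta>)))"
    using pgf_formula[OF k1] by blast
  have PP: "\<And>p. 1 \<le> p \<Longrightarrow> p \<le> n \<Longrightarrow> probP phi \<theta> n k p =
           real (n choose p) * (\<Sum>q=1..p. (-1) ^ (p - q) * real (p choose q) *
             (sigma phi k (real q * \<theta>) / sigma phi k (real n * \<theta>)))"
    using probP_formula[OF k1] by blast
  have M: "meanP phi \<theta> n k =
            real n * (1 - sigma phi k (real (n - 1) * \<theta>) / sigma phi k (real n * \<theta>))"
    using mean_formula[where phi=phi and \<theta>=\<theta> and n=n and k=k, OF A] by (simp add: rr_def)
  have V: "varP phi \<theta> n k =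
            real n * (sigma phi k (real (n - 1) * \<theta>) / sigma phi k (real n * \<theta>)
              + (real n - 1) * (sigma phi k (real (n - 2) * \<theta>) / sigma phi k (real n * \<theta>))
              - real n * (sigma phi k (real (n - 1) * \<theta>) / sigma phi k (real n * \<theta>)) ^ 2)"
  proof -
    have "varP phi \<theta> n k = (real n ^ 2 + real n * (1 - 2 * real n) * rr phi \<theta> n k (n - 1) + real n * (real n - 1) * rr phi \<theta> n k (n - 2))
        - (real n * (1 - rr phi \<theta> n k (n - 1)))^2"
      unfolding varP_def using second_formula[where phi=phi and \<theta>=\<theta> and n=n and k=k, OF A] mean_formula[where phi=phi and \<theta>=\<theta> and n=n and k=k, OF A] by simp
    also have "\<dots> = real n * (rr phi \<theta> n k (n - 1) + (real n - 1) * rr phi \<theta> n k (n - 2) - real n * rr phi \<theta> n k (n - 1) ^ 2)"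
      by (simp add: power2_eq_square algebra_simps)
    finally show ?thesis by (simp add: rr_def)
  qed
  have S: "k < n \<Longrightarrow> {p. probP phi \<theta> n k p \<noteq> 0} = {1..k}"
    using support[where phi=phi and \<theta>=\<theta> and n=n and k=k, OF phi_nonneg phi1 theta k1] by blast
  show ?thesis using P1 PP M V S by auto
qed

end
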